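(* Let $p\ge 5$ be a prime and $k$ an integer with $1\le k\le \frac{p-3}{2}$, and put $t=p-1-2k$. Then, modulo $p$, \begin{align*} (-1)^k 4^{2k-1} E_t \equiv{}& 32^t S_t(0, \tfrac{1}{128}) + 6^t S_t(\tfrac{1}{8}, \tfrac{7}{48}) + 6^t S_t(\tfrac{3}{16}, \tfrac{5}{24}) + (2^t + 4^t) S_t(\tfrac{7}{16}, \tfrac{11}{24})\\ &+ (2^t + 4^t + 6^t) S_t(\tfrac{11}{24}, \tfrac{15}{32}) + (2^t + 4^t + 6^t + 8^t) S_t(\tfrac{15}{32}, \tfrac{23}{48}) + (2^t + 4^t + 8^t) S_t(\tfrac{23}{48}, \tfrac{31}{64})\\ &+ (2^t + 4^t + 8^t + 16^t) S_t(\tfrac{31}{64}, \tfrac{63}{128}) + (2^t + 4^t + 8^t + 16^t + 32^t) S_t(\tfrac{63}{128}, \tfrac{1}{2}). \end{align*}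
   Context: $E_n$ denotes the $n$th Euler number, defined by $\sec z=\sum_{n\ge0}E_n\frac{z^n}{n!}$ (so $E_2=1$, $E_4=5$). For a prime $p$, an integer $\ell$ and real numbers $0\le x<y\le 1$, $S_\ell(x,y)=\sum_{xp<s<yp} s^\ell$, the sum over integers $s$ strictly between $xp$ and $yp$. Congruences between rational numbers modulo $p$ mean that the difference has $p$-adic valuation at least $1$. *)

theory Defs
  imports "HOL-Computational_Algebra.Computational_Algebra"
begin

definition euler_num :: "nat \<Rightarrow> rat" where
  "euler_num n = fact n * fps_nth (inverse (fps_cos (1::rat))) n"

definition S_sum :: "nat \<Rightarrow> nat \<Rightarrow> rat \<Rightarrow> rat \<Rightarrow> rat" where
  "S_sum p l x y = (\<Sum>s\<in>{s::int. x * of_nat p < of_int s \<and> of_int s < y * of_nat p}. (of_int s) ^ l)"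

definition cong_rat :: "nat \<Rightarrow> rat \<Rightarrow> rat \<Rightarrow> bool" where
  "cong_rat p x y \<longleftrightarrow> (\<exists>a b::int. x - y = of_int a / of_int b \<and> \<not> int p dvd b \<and> int p dvd a)"

end

theory Submission
  imports Defs "HOL-Number_Theory.Number_Theory"
begin

lemma euler_rec:
  "(\<Sum>i\<le>n. of_nat (n choose i) * (if even i then (-1)^(i div 2) else 0) * euler_num (n-i))
     = (if n = 0 then 1 else (0::rat))"
proof -
  have inv: "fps_cos (1::rat) * inverse (fps_cos 1) = 1"
    by (rule inverse_mult_eq_1') simp
  have "(fps_cos (1::rat) * inverse (fps_cos 1)) $ n = (if n = 0 then 1 else 0)"
    using inv by simp
  hence eq: "(\<Sum>i=0..n. fps_cos (1::rat) $ i * inverse (fps_cos 1) $ (n - i)) = (if n = 0 then 1 else 0)"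
    by (simp add: fps_mult_nth)
  have "(\<Sum>i\<le>n. of_nat (n choose i) * (if even i then (-1)^(i div 2) else 0) * euler_num (n-i))
     = fact n * (\<Sum>i=0..n. fps_cos (1::rat) $ i * inverse (fps_cos 1) $ (n - i))"
    unfolding sum_distrib_left atMost_atLeast0
  proof (rule sum.cong[OF refl])
    fix i assume i: "i \<in> {0..n}"
    hence "of_nat (n choose i) = (fact n / (fact i * fact (n - i)) :: rat)"
      by (simp add: binomial_fact)
    thus "of_nat (n choose i) * (if even i then (-1)^(i div 2) else 0) * euler_num (n-i) =
          fact n * (fps_cos (1::rat) $ i * inverse (fps_cos 1) $ (n - i))"
      by (simp add: euler_num_def fps_cos_def field_simps)
  qed
  also have "\<dots> = (if n = 0 then 1 else 0)" using eq by simp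
  finally show ?thesis .
qed

definition Fs :: "nat \<Rightarrow> rat" where "Fs n = (-1)^(n div 2) * euler_num n"

lemma Fs_rec:
  "(\<Sum>i\<le>n. of_nat (n choose i) * (if even i then 1 else 0) * Fs (n-i))
     = (if n = 0 then 1 else (0::rat))"
proof -
  have "(\<Sum>i\<le>n. of_nat (n choose i) * (if even i then 1 else 0) * Fs (n-i))
     = (-1)^(n div 2) * (\<Sum>i\<le>n. of_nat (n choose i) * (if even i then (-1)^(i div 2) else 0) * euler_num (n-i))"
    unfolding sum_distrib_left
  proof (rule sum.cong[OF refl])
    fix i assume i: "i \<in> {..n}"
    show "of_nat (n choose i) * (if even i then 1 else 0) * Fs (n-i) =
      (-1)^(n div 2) * (of_nat (n choose i) * (if even i then (-1)^(i div 2) else 0) * euler_num (n-i))"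
    proof (cases "even i")
      case True
      then obtain m where m: "i = 2*m" by blast
      have "n div 2 = m + (n - i) div 2" using i m by auto
      hence "(-1::rat)^(n div 2) * (-1)^(i div 2) = (-1)^((n-i) div 2)"
        using m by (simp add: power_add mult_ac power_mult_distrib[symmetric])
      thus ?thesis using True by (simp add: Fs_def mult_ac)
    qed simp
  qed
  also have "\<dots> = (if n = 0 then 1 else 0)" by (simp add: euler_rec)
  finally show ?thesis .
qed

definition aseq :: "nat \<Rightarrow> nat \<Rightarrow> int" where
  "aseq p n = (\<Sum>j<p. (-1)^j * (2 * int j + 1 - int p)^n)"

lemma binom_pm: "(x + 1)^n + (x - 1)^n = (\<Sum>i\<le>n. of_nat (n choose i) * (1 + (-1)^i) * (x::int)^(n-i))"
proof -
  have "(1 + x)^n = (\<Sum>i\<le>n. of_nat (n choose i) * 1^i * x^(n-i))" by (rule binomial_ring)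
  moreover have "((-1) + x)^n = (\<Sum>i\<le>n. of_nat (n choose i) * (-1)^i * x^(n-i))" by (rule binomial_ring)
  ultimately show ?thesis by (simp add: sum.distrib[symmetric] algebra_simps)
qed

lemma aseq_rec:
  assumes "odd p"
  shows "(\<Sum>i\<le>n. of_nat (n choose i) * (1 + (-1)^i) * aseq p (n-i)) = (- int p)^n + (int p)^n"
proof -
  define g where "g j = (-1::int)^j * (2 * int j - int p)^n" for j
  have "(\<Sum>i\<le>n. of_nat (n choose i) * (1 + (-1)^i) * aseq p (n-i))
      = (\<Sum>j<p. (-1)^j * (\<Sum>i\<le>n. of_nat (n choose i) * (1 + (-1)^i) * (2 * int j + 1 - int p)^(n-i)))"
    unfolding aseq_def sum_distrib_left
    by (subst sum.swap) (simp add: mult_ac)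
  also have "\<dots> = (\<Sum>j<p. g j - g (Suc j))"
  proof (rule sum.cong[OF refl])
    fix j
    have "(\<Sum>i\<le>n. of_nat (n choose i) * (1 + (-1)^i) * (2 * int j + 1 - int p)^(n-i))
       = (2 * int j + 1 - int p + 1)^n + (2 * int j + 1 - int p - 1)^n"
      by (rule binom_pm[symmetric])
    thus "(-1)^j * (\<Sum>i\<le>n. of_nat (n choose i) * (1 + (-1)^i) * (2 * int j + 1 - int p)^(n-i)) = g j - g (Suc j)"
      by (simp add: g_def algebra_simps)
  qed
  also have "\<dots> = g 0 - g p" by (rule sum_lessThan_telescope')
  also have "\<dots> = (- int p)^n + (int p)^n"
    using assms by (simp add: g_def)
  finally show ?thesis .
qed

definition pmul :: "nat \<Rightarrow> rat \<Rightarrow> bool" where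
  "pmul p x \<longleftrightarrow> (\<exists>z. x = of_int (int p * z))"

lemma pmul_add: "pmul p x \<Longrightarrow> pmul p y \<Longrightarrow> pmul p (x + y)"
  unfolding pmul_def by (metis distrib_left of_int_add)
lemma pmul_diff: "pmul p x \<Longrightarrow> pmul p y \<Longrightarrow> pmul p (x - y)"
  unfolding pmul_def by (metis right_diff_distrib of_int_diff)
lemma pmul_multl: "pmul p x \<Longrightarrow> pmul p (of_int c * x)"
  unfolding pmul_def by (metis mult.left_commute of_int_mult)
lemma pmul_sum: "finite A \<Longrightarrow> (\<And>i. i \<in> A \<Longrightarrow> pmul p (f i)) \<Longrightarrow> pmul p (sum f A)"
proof (induction A rule: finite_induct)
  case empty then show ?case unfolding pmul_def by (intro exI[of _ 0]) simp
next
  case (insert x F) then show ?case by (simp add: pmul_add)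
qed

lemma Fs_aseq:
  assumes "odd p"
  shows "pmul p (Fs n - of_int (aseq p n))"
proof (induction n rule: less_induct)
  case (less n)
  define d where "d m = Fs m - of_int (aseq p m)" for m
  have ra: "(\<Sum>i\<le>n. of_nat (n choose i) * (if even i then 1 else 0) * (of_int (aseq p (n-i))::rat))
        = ((- of_nat p)^n + (of_nat p)^n) / 2"
  proof -
    have "(\<Sum>i\<le>n. of_nat (n choose i) * (1 + (-1)^i) * (of_int (aseq p (n-i))::rat))
          = of_int ((- int p)^n + (int p)^n)"
      unfolding aseq_rec[OF assms, symmetric] by simp
    moreover have "(\<Sum>i\<le>n. of_nat (n choose i) * (1 + (-1)^i) * (of_int (aseq p (n-i))::rat))
       = 2 * (\<Sum>i\<le>n. of_nat (n choose i) * (if even i then 1 else 0) * (of_int (aseq p (n-i))::rat))"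
      unfolding sum_distrib_left by (rule sum.cong) auto
    ultimately show ?thesis by simp
  qed
  have rec: "(\<Sum>i\<le>n. of_nat (n choose i) * (if even i then 1 else 0) * d (n-i))
        = (if n = 0 then 1 else 0) - ((- of_nat p)^n + (of_nat p)^n) / 2"
    unfolding d_def using Fs_rec[of n] ra
    by (simp add: algebra_simps sum_subtractf)
  show ?case
  proof (cases n)
    case 0
    have "aseq p 0 = 1"
    proof -
      have "aseq p 0 = (\<Sum>j<p. (-1::int)^j)" by (simp add: aseq_def)
      also have "\<dots> = 1" using assms
      proof -
        have "(\<Sum>j<2*m+1. (-1::int)^j) = 1" for m by (induction m) auto
        thus ?thesis using assms by (metis oddE)
      qed
      finally show ?thesis .
    qed
    thus ?thesis using 0 by (simp add: Fs_def euler_num_def pmul_def)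
  next
    case (Suc m)
    have split: "(\<Sum>i\<le>n. of_nat (n choose i) * (if even i then 1 else 0) * d (n-i))
        = d n + (\<Sum>i\<in>{1..n}. of_nat (n choose i) * (if even i then 1 else 0) * d (n-i))"
      using Suc by (simp add: atMost_atLeast0 sum.atLeast_Suc_atMost)
    have p1: "pmul p (((- of_nat p)^n + (of_nat p)^n) / 2)"
    proof (cases "even n")
      case True
      then show ?thesis unfolding pmul_def using Suc
        by (intro exI[of _ "int p ^ m"]) simp
    next
      case False
      then show ?thesis unfolding pmul_def by (intro exI[of _ 0]) simp
    qed
    have p2: "pmul p (\<Sum>i\<in>{1..n}. of_nat (n choose i) * (if even i then 1 else 0) * d (n-i))"
    proof (rule pmul_sum)
      fix i assume "i \<in> {1..n}"
      hence "pmul p (d (n-i))" using less unfolding d_def by auto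
      hence "pmul p (of_int (int (n choose i) * (if even i then 1 else 0)) * d (n-i))" by (rule pmul_multl)
      thus "pmul p (of_nat (n choose i) * (if even i then 1 else 0) * d (n-i))" by (cases "even i") (auto simp: pmul_def)
    qed simp
    have "d n = - (((- of_nat p)^n + (of_nat p)^n) / 2) - (\<Sum>i\<in>{1..n}. of_nat (n choose i) * (if even i then 1 else 0) * d (n-i))"
      using rec split Suc by simp
    moreover have "pmul p (- (((- of_nat p)^n + (of_nat p)^n) / 2) - (\<Sum>i\<in>{1..n}. of_nat (n choose i) * (if even i then 1 else 0) * d (n-i)))"
      using pmul_diff[OF pmul_multl[OF p1, of "-1"] p2] by (simp add: minus_divide_left)
    ultimately show ?thesis unfolding d_def by simp
  qed
qed

definition Pw :: "nat \<Rightarrow> nat \<Rightarrow> int" where "Pw t m = (\<Sum>j<m. int (Suc j)^t)"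
definition Aw :: "nat \<Rightarrow> nat \<Rightarrow> int" where "Aw t m = (\<Sum>j<m. (-1)^(Suc j) * int (Suc j)^t)"

lemma sum_lessThan_add_split: "(\<Sum>j<(m::nat)+n. f j) = (\<Sum>j<m. f j) + (\<Sum>j<n. f (m+j))"
  by (induction n) (auto simp: add_ac)

lemma aseq_Aw:
  assumes p: "p = 2*h+1" and t: "even t" "t > 0"
  shows "aseq p t = 2 * (-1)^h * 2^t * Aw t h"
proof -
  define f where "f j = (-1::int)^j * (2 * int j - 2 * int h)^t" for j
  have a: "aseq p t = (\<Sum>j<h+(h+1). f j)"
    unfolding aseq_def f_def p by (intro sum.cong) (auto simp: algebra_simps)
  have b: "(\<Sum>j<h+1. f (h+j)) = (\<Sum>j<h. f (h+1+j))"
  proof -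
    have "f (h+0) = 0" using t by (simp add: f_def)
    thus ?thesis unfolding Suc_eq_plus1[symmetric] sum.lessThan_Suc_shift by simp
  qed
  have c: "(\<Sum>j<h. f j) = (\<Sum>j<h. f (h - Suc j))"
    by (rule sum.nat_diff_reindex[symmetric])
  have d: "f (h - Suc j) = f (h+1+j)" if "j < h" for j
  proof -
    have e: "h+1+j = (h - Suc j) + 2*(j+1)" using that by simp
    have "(-1::int)^(h+1+j) = (-1)^(h - Suc j)" unfolding e by (simp add: power_add power_mult)
    moreover have "(2 * int (h - Suc j) - 2 * int h)^t = (2 * int (h+1+j) - 2 * int h)^t"
    proof -
      have "(2 * int (h - Suc j) - 2 * int h) = - (2 * int (h+1+j) - 2 * int h)" using that by simp
      hence "(2 * int (h - Suc j) - 2 * int h)^t = (- (2 * int (h+1+j) - 2 * int h))^t" by (rule arg_cong)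
      also have "\<dots> = (2 * int (h+1+j) - 2 * int h)^t" using t(1) by (rule Parity.power_minus_even)
      finally show ?thesis .
    qed
    ultimately show ?thesis unfolding f_def by simp
  qed
  have g: "f (h+1+j) = (-1)^h * 2^t * ((-1)^(Suc j) * int (Suc j)^t)" for j
  proof -
    have eq: "2 * int (h+1+j) - 2 * int h = 2 * int (Suc j)" by simp
    show ?thesis unfolding f_def eq power_mult_distrib by (simp add: power_add algebra_simps)
  qed
  have "aseq p t = (\<Sum>j<h. f (h+1+j)) + (\<Sum>j<h. f (h+1+j))"
  proof -
    have "aseq p t = (\<Sum>j<h. f j) + (\<Sum>j<h+1. f (h+j))"
      unfolding a by (rule sum_lessThan_add_split)
    also have "\<dots> = (\<Sum>j<h. f (h - Suc j)) + (\<Sum>j<h. f (h+1+j))" using b c by simp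
    also have "(\<Sum>j<h. f (h - Suc j)) = (\<Sum>j<h. f (h+1+j))" using d by (intro sum.cong) auto
    finally show ?thesis .
  qed
  also have "\<dots> = 2 * (-1)^h * 2^t * Aw t h"
    unfolding g Aw_def sum_distrib_left[symmetric] by simp
  finally show ?thesis .
qed

lemma Aw_Pw: "Aw t m = 2 * 2^t * Pw t (m div 2) - Pw t m"
proof (induction m)
  case 0 then show ?case by (simp add: Aw_def Pw_def)
next
  case (Suc m)
  show ?case
  proof (cases "even m")
    case True
    then have "Suc m div 2 = m div 2" by simp
    then show ?thesis using Suc True by (simp add: Aw_def Pw_def)
  next
    case False
    then obtain r where r: "m = 2*r+1" by (metis oddE)
    then have "Suc m div 2 = Suc (m div 2)" "Suc (m div 2) = r + 1" by simp_all
    moreover have "int (Suc m) ^ t = 2^t * int (Suc r)^t" using r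
      by (simp add: power_mult_distrib[symmetric])
    ultimately show ?thesis using Suc False r by (simp add: Aw_def Pw_def algebra_simps)
  qed
qed

lemma powsum_zero:
  assumes p: "prime p" and t: "0 < t" "t < p - 1"
  shows "[(\<Sum>v\<in>{1..<p}. v^t) = 0] (mod p)"
proof -
  obtain g where g: "residue_primroot p g" using prime_primitive_root_exists p prime_gt_1_nat by blast
  have cop: "coprime p g" and ordg: "ord p g = p - 1"
    using g p by (auto simp: residue_primroot_def totient_prime)
  have p1: "p > 1" using p prime_gt_1_nat by blast
  define f where "f v = g * v mod p" for v
  have inj: "inj_on f {1..<p}"
  proof
    fix v w assume v: "v \<in> {1..<p}" and w: "w \<in> {1..<p}" and e: "f v = f w"
    hence "[g * v = g * w] (mod p)" by (simp add: f_def cong_def)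
    hence "[v = w] (mod p)" using cop by (metis cong_mult_lcancel_nat coprime_commute)
    thus "v = w" using v w by (simp add: cong_def)
  qed
  have sub: "f ` {1..<p} \<subseteq> {1..<p}"
  proof
    fix x assume "x \<in> f ` {1..<p}"
    then obtain v where v: "v \<in> {1..<p}" and x: "x = f v" by blast
    have "\<not> p dvd v" using v by (auto dest: dvd_imp_le)
    moreover have "\<not> p dvd g" using cop p
      by (metis coprime_def dvd_refl not_prime_unit)
    ultimately have "\<not> p dvd g * v" using p by (simp add: prime_dvd_mult_iff)
    hence "x \<noteq> 0" unfolding x f_def by (simp add: mod_eq_0_iff_dvd)
    moreover have "x < p" unfolding x f_def using p1 by simp
    ultimately show "x \<in> {1..<p}" by simp
  qed
  have im: "f ` {1..<p} = {1..<p}" by (rule endo_inj_surj[OF _ sub inj]) simp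
  define S where "S = (\<Sum>v\<in>{1..<p}. v^t)"
  have "S = (\<Sum>v\<in>f ` {1..<p}. v^t)" unfolding S_def im ..
  also have "\<dots> = (\<Sum>v\<in>{1..<p}. (f v)^t)" using sum.reindex[OF inj, of "\<lambda>v. v^t"] by (simp add: comp_def)
  finally have "S = (\<Sum>v\<in>{1..<p}. (f v)^t)" .
  moreover have "[(\<Sum>v\<in>{1..<p}. (f v)^t) = (\<Sum>v\<in>{1..<p}. (g*v)^t)] (mod p)"
  proof (rule cong_sum, rule cong_pow)
    fix v show "[f v = g * v] (mod p)" by (simp add: f_def cong_def)
  qed
  ultimately have "[S = (\<Sum>v\<in>{1..<p}. (g*v)^t)] (mod p)" by simp
  hence c1: "[S = g^t * S] (mod p)"
    by (simp add: S_def power_mult_distrib sum_distrib_left)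
  hence "[g^t * S = S] (mod p)" by (rule cong_sym)
  hence "[int (g^t * S) = int S] (mod int p)" by (simp only: cong_int_iff)
  hence "int p dvd (int (g^t * S) - int S)" by (simp add: cong_iff_dvd_diff)
  moreover have "int (g^t * S) - int S = (int g^t - 1) * int S" by (simp add: algebra_simps)
  ultimately have "int p dvd (int g^t - 1) * int S" by simp
  moreover have "prime (int p)" using p by simp
  ultimately have "int p dvd (int g^t - 1) \<or> int p dvd int S" by (simp add: prime_dvd_mult_iff)
  moreover have "\<not> int p dvd (int g^t - 1)"
  proof
    assume "int p dvd (int g^t - 1)"
    hence "[int g ^ t = int 1] (mod int p)" by (simp add: cong_iff_dvd_diff)
    hence "[g^t = 1] (mod p)" by (metis cong_int_iff of_nat_power)
    hence "ord p g dvd t" by (simp only: ord_divides)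
    hence "(p - 1) dvd t" using ordg by simp
    thus False using t by (auto dest: dvd_imp_le)
  qed
  ultimately have "p dvd S" by simp
  thus ?thesis by (simp add: S_def cong_0_iff)
qed

definition SI :: "nat \<Rightarrow> nat \<Rightarrow> rat \<Rightarrow> rat \<Rightarrow> int" where
  "SI p t x y = (\<Sum>s\<in>{s::int. x * of_nat p < of_int s \<and> of_int s < y * of_nat p}. s^t)"

lemma S_SI: "S_sum p t x y = of_int (SI p t x y)"
  by (simp add: S_sum_def SI_def)

lemma fin_set: "finite {s::int. (x::rat) * of_nat p < of_int s \<and> of_int s < (y::rat) * of_nat p}"
proof (rule finite_subset)
  show "{s::int. x * of_nat p < of_int s \<and> of_int s < y * of_nat p} \<subseteq> {\<lfloor>x * of_nat p\<rfloor>..\<lceil>y * of_nat p\<rceil>}"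
  proof
    fix s assume "s \<in> {s::int. x * of_nat p < of_int s \<and> of_int s < (y::rat) * of_nat p}"
    hence a: "x * of_nat p < of_int s" and b: "of_int s < y * of_nat p" by auto
    have "of_int \<lfloor>x * of_nat p\<rfloor> < (of_int s :: rat)" using a of_int_floor_le[of "x * of_nat p"] by linarith
    moreover have "(of_int s :: rat) < of_int \<lceil>y * of_nat p\<rceil>" using b le_of_int_ceiling[of "y * of_nat p"] by linarith
    ultimately show "s \<in> {\<lfloor>x * of_nat p\<rfloor>..\<lceil>y * of_nat p\<rceil>}" by simp
  qed
qed simp

lemma cong_neg_pow:
  assumes "even t"
  shows "[(int p - s)^t = s^t] (mod int p)"
proof -
  have "[int p - s = - s] (mod int p)" by (simp add: cong_iff_dvd_diff)
  hence "[(int p - s)^t = (- s)^t] (mod int p)" by (rule cong_pow)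
  thus ?thesis using assms by simp
qed

lemma SI_sym:
  assumes "even t"
  shows "[SI p t x y = SI p t (1-y) (1-x)] (mod int p)"
proof -
  define A where "A = {s::int. x * of_nat p < of_int s \<and> of_int s < (y::rat) * of_nat p}"
  define B where "B = {s::int. (1-y) * of_nat p < of_int s \<and> of_int s < (1-x) * of_nat p}"
  define h where "h s = int p - s" for s
  have inj: "inj_on h A" unfolding h_def by (rule inj_onI) simp
  have img: "B = h ` A"
  proof
    show "h ` A \<subseteq> B" unfolding A_def B_def h_def by (auto simp: algebra_simps)
    show "B \<subseteq> h ` A"
    proof
      fix s assume s: "s \<in> B"
      have "int p - s \<in> A" using s unfolding A_def B_def by (auto simp: algebra_simps)
      moreover have "s = h (int p - s)" unfolding h_def by simp
      ultimately show "s \<in> h ` A" by blast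
    qed
  qed
  have "SI p t (1-y) (1-x) = (\<Sum>s\<in>A. (int p - s)^t)"
    unfolding SI_def B_def[symmetric] img using sum.reindex[OF inj, of "\<lambda>s. s^t"] by (simp add: h_def comp_def)
  moreover have "[(\<Sum>s\<in>A. (int p - s)^t) = (\<Sum>s\<in>A. s^t)] (mod int p)"
    by (rule cong_sum, rule cong_neg_pow[OF assms])
  ultimately show ?thesis unfolding SI_def A_def[symmetric] by (simp add: cong_sym)
qed

lemma SI_D2:
  assumes t: "even t" and p: "odd p"
  shows "[SI p t a b = 2^t * (SI p t (a/2) (b/2) + SI p t ((1-b)/2) ((1-a)/2))] (mod int p)"
proof -
  define A where "A = {s::int. a * of_nat p < of_int s \<and> of_int s < b * of_nat p}"
  define A1 where "A1 = {s::int. a/2 * of_nat p < of_int s \<and> of_int s < b/2 * of_nat p}"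
  define A2 where "A2 = {s::int. (1-b)/2 * of_nat p < of_int s \<and> of_int s < (1-a)/2 * of_nat p}"
  define h1 where "h1 s = 2 * s" for s :: int
  define h2 where "h2 s = int p - 2 * s" for s :: int
  have inj1: "inj_on h1 A1" unfolding h1_def by (rule inj_onI) simp
  have inj2: "inj_on h2 A2" unfolding h2_def by (rule inj_onI) simp
  have fin1: "finite A1" unfolding A1_def by (rule fin_set)
  have fin2: "finite A2" unfolding A2_def by (rule fin_set)
  have oddp: "odd (int p)" using p by simp
  have disj: "h1 ` A1 \<inter> h2 ` A2 = {}"
  proof (rule ccontr)
    assume "h1 ` A1 \<inter> h2 ` A2 \<noteq> {}"
    then obtain u v where "2 * u = int p - 2 * v" unfolding h1_def h2_def by auto
    hence "int p = 2 * (u + v)" by simp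
    thus False using oddp by simp
  qed
  have img: "A = h1 ` A1 \<union> h2 ` A2"
  proof
    show "h1 ` A1 \<union> h2 ` A2 \<subseteq> A" unfolding A_def A1_def A2_def h1_def h2_def
      by (auto simp: algebra_simps)
    show "A \<subseteq> h1 ` A1 \<union> h2 ` A2"
    proof
      fix r assume r: "r \<in> A"
      show "r \<in> h1 ` A1 \<union> h2 ` A2"
      proof (cases "even r")
        case True
        then obtain s where s: "r = 2 * s" by blast
        have "s \<in> A1" using r unfolding A_def A1_def s by (auto simp: algebra_simps)
        thus ?thesis unfolding h1_def s by blast
      next
        case False
        hence "even (int p - r)" using oddp by simp
        then obtain s where s: "int p - r = 2 * s" by blast
        hence rs: "r = int p - 2 * s" by simp
        have "s \<in> A2" using r unfolding A_def A2_def rs by (auto simp: algebra_simps)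
        thus ?thesis unfolding h2_def rs by blast
      qed
    qed
  qed
  have "SI p t a b = (\<Sum>s\<in>A1. (h1 s)^t) + (\<Sum>s\<in>A2. (h2 s)^t)"
    unfolding SI_def A_def[symmetric] img
    by (simp add: sum.union_disjoint[OF _ _ disj] fin1 fin2 sum.reindex[OF inj1] sum.reindex[OF inj2] comp_def)
  moreover have "[(\<Sum>s\<in>A2. (h2 s)^t) = (\<Sum>s\<in>A2. (2*s)^t)] (mod int p)"
    unfolding h2_def by (rule cong_sum, rule cong_neg_pow[OF t])
  ultimately have "[SI p t a b = (\<Sum>s\<in>A1. (2*s)^t) + (\<Sum>s\<in>A2. (2*s)^t)] (mod int p)"
    unfolding h1_def by (simp add: cong_add)
  thus ?thesis unfolding SI_def A1_def[symmetric] A2_def[symmetric]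
    by (simp add: power_mult_distrib sum_distrib_left distrib_left)
qed

lemma SI_D3:
  assumes p3: "\<not> 3 dvd p"
  shows "[SI p t (3*x) (3*y) = 3^t * (SI p t x y + SI p t (x+1/3) (y+1/3) + SI p t (x+2/3) (y+2/3))] (mod int p)"
proof -
  define A where "A = {s::int. (3*x) * of_nat p < of_int s \<and> of_int s < (3*y) * of_nat p}"
  define A0 where "A0 = {s::int. x * of_nat p < of_int s \<and> of_int s < y * of_nat p}"
  define A1 where "A1 = {s::int. (x+1/3) * of_nat p < of_int s \<and> of_int s < (y+1/3) * of_nat p}"
  define A2 where "A2 = {s::int. (x+2/3) * of_nat p < of_int s \<and> of_int s < (y+2/3) * of_nat p}"
  define h0 where "h0 s = 3 * s" for s :: int
  define h1 where "h1 s = 3 * s - int p" for s :: int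
  define h2 where "h2 s = 3 * s - 2 * int p" for s :: int
  have inj0: "inj_on h0 A0" unfolding h0_def by (rule inj_onI) simp
  have inj1: "inj_on h1 A1" unfolding h1_def by (rule inj_onI) simp
  have inj2: "inj_on h2 A2" unfolding h2_def by (rule inj_onI) simp
  have fin0: "finite A0" unfolding A0_def by (rule fin_set)
  have fin1: "finite A1" unfolding A1_def by (rule fin_set)
  have fin2: "finite A2" unfolding A2_def by (rule fin_set)
  have p3': "\<not> 3 dvd int p" using p3 by presburger
  have disj01: "h0 ` A0 \<inter> h1 ` A1 = {}"
  proof (rule ccontr)
    assume "h0 ` A0 \<inter> h1 ` A1 \<noteq> {}"
    then obtain u v where "3 * u = 3 * v - int p" unfolding h0_def h1_def by auto
    thus False using p3' by presburger
  qed
  have disj2: "(h0 ` A0 \<union> h1 ` A1) \<inter> h2 ` A2 = {}"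
  proof (rule ccontr)
    assume "(h0 ` A0 \<union> h1 ` A1) \<inter> h2 ` A2 \<noteq> {}"
    then obtain r where r1: "r \<in> h0 ` A0 \<union> h1 ` A1" and r2: "r \<in> h2 ` A2" by blast
    from r1 have "\<exists>u. r = 3*u \<or> r = 3*u - int p" unfolding h0_def h1_def by auto
    moreover from r2 have "\<exists>v. r = 3*v - 2*int p" unfolding h2_def by auto
    ultimately show False using p3' by presburger
  qed
  have img: "A = (h0 ` A0 \<union> h1 ` A1) \<union> h2 ` A2"
  proof
    show "(h0 ` A0 \<union> h1 ` A1) \<union> h2 ` A2 \<subseteq> A" unfolding A_def A0_def A1_def A2_def h0_def h1_def h2_def
      by (auto simp: algebra_simps)
    show "A \<subseteq> (h0 ` A0 \<union> h1 ` A1) \<union> h2 ` A2"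
    proof
      fix r assume r: "r \<in> A"
      have "3 dvd r \<or> 3 dvd (r + int p) \<or> 3 dvd (r + 2 * int p)" using p3' by presburger
      moreover
      { assume "3 dvd r"
        then obtain s where s: "r = 3 * s" by blast
        have "s \<in> A0" using r unfolding A_def A0_def s by (auto simp: algebra_simps)
        hence "r \<in> h0 ` A0" unfolding h0_def s by blast }
      moreover
      { assume "3 dvd (r + int p)"
        then obtain s where s: "r + int p = 3 * s" by blast
        hence rs: "r = 3 * s - int p" by simp
        have "s \<in> A1" using r unfolding A_def A1_def rs by (auto simp: algebra_simps)
        hence "r \<in> h1 ` A1" unfolding h1_def rs by blast }
      moreover
      { assume "3 dvd (r + 2 * int p)"
        then obtain s where s: "r + 2 * int p = 3 * s" by blast
        hence rs: "r = 3 * s - 2 * int p" by simp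
        have "s \<in> A2" using r unfolding A_def A2_def rs by (auto simp: algebra_simps)
        hence "r \<in> h2 ` A2" unfolding h2_def rs by blast }
      ultimately show "r \<in> (h0 ` A0 \<union> h1 ` A1) \<union> h2 ` A2" by blast
    qed
  qed
  have "SI p t (3*x) (3*y) = (\<Sum>s\<in>A0. (h0 s)^t) + (\<Sum>s\<in>A1. (h1 s)^t) + (\<Sum>s\<in>A2. (h2 s)^t)"
    unfolding SI_def A_def[symmetric] img
    by (simp add: sum.union_disjoint[OF _ _ disj2] sum.union_disjoint[OF _ _ disj01] fin0 fin1 fin2
        sum.reindex[OF inj0] sum.reindex[OF inj1] sum.reindex[OF inj2] comp_def)
  moreover have "[(\<Sum>s\<in>A1. (h1 s)^t) = (\<Sum>s\<in>A1. (3*s)^t)] (mod int p)"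
  proof (rule cong_sum, rule cong_pow)
    fix s show "[h1 s = 3 * s] (mod int p)" unfolding h1_def by (simp add: cong_iff_dvd_diff)
  qed
  moreover have "[(\<Sum>s\<in>A2. (h2 s)^t) = (\<Sum>s\<in>A2. (3*s)^t)] (mod int p)"
  proof (rule cong_sum, rule cong_pow)
    fix s show "[h2 s = 3 * s] (mod int p)" unfolding h2_def by (simp add: cong_iff_dvd_diff)
  qed
  ultimately have "[SI p t (3*x) (3*y) = (\<Sum>s\<in>A0. (3*s)^t) + (\<Sum>s\<in>A1. (3*s)^t) + (\<Sum>s\<in>A2. (3*s)^t)] (mod int p)"
    unfolding h0_def by (simp add: cong_add)
  thus ?thesis unfolding SI_def A0_def[symmetric] A1_def[symmetric] A2_def[symmetric]
    by (simp add: power_mult_distrib sum_distrib_left distrib_left)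
qed

lemma SI_split:
  assumes "a \<le> b" "b \<le> c" and nb: "\<And>s::int. b * of_nat p \<noteq> of_int s"
  shows "SI p t a c = SI p t a b + SI p t b c"
proof -
  have pp: "(0::rat) \<le> of_nat p" by simp
  have e: "{s::int. a * of_nat p < of_int s \<and> of_int s < c * of_nat p} =
     {s::int. a * of_nat p < of_int s \<and> of_int s < b * of_nat p} \<union> {s::int. b * of_nat p < of_int s \<and> of_int s < c * of_nat p}"
  proof -
    have "a * of_nat p \<le> b * of_nat p" "b * of_nat p \<le> c * of_nat p"
      using assms(1,2) pp by (simp_all add: mult_right_mono)
    thus ?thesis using nb by (auto, metis linorder_neqE)
  qed
  show ?thesis unfolding SI_def e
    by (rule sum.union_disjoint) (auto intro: fin_set)
qed

lemma noint:
  assumes "b * of_int d = (of_int n :: rat)" "odd n" "even d" "odd p"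
  shows "b * of_nat p \<noteq> of_int s"
proof
  assume "b * of_nat p = of_int s"
  hence "of_int n * of_nat p = (of_int (d * s) :: rat)"
    using assms(1) by (metis mult.commute mult.left_commute of_int_mult)
  hence "n * int p = d * s" by (metis of_int_eq_iff of_int_mult of_int_of_nat_eq)
  thus False using assms(2-4) by (metis even_mult_iff even_of_nat)
qed

lemma Pw_nat: "Pw t m = int (\<Sum>v\<in>{1..m}. v^t)"
  by (induction m) (simp_all add: Pw_def)

lemma Pw_int: "Pw t m = (\<Sum>s\<in>{1..int m}. s^t)"
proof (induction m)
  case 0 then show ?case by (simp add: Pw_def)
next
  case (Suc m)
  have "{1..int (Suc m)} = insert (int m + 1) {1..int m}" by auto
  then show ?case using Suc by (simp add: Pw_def add_ac)
qed

lemma SI_quarter: assumes op: "odd p" shows "SI p t 0 (1/4) = Pw t (p div 4)"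
proof -
  have "{s::int. 0 * of_nat p < (of_int s::rat) \<and> (of_int s::rat) < 1/4 * of_nat p} = {1..int (p div 4)}"
  proof -
    have "(of_int s < 1/4 * (of_nat p::rat)) \<longleftrightarrow> 4 * s < int p" for s
    proof -
      have "(of_int s < 1/4 * (of_nat p::rat)) \<longleftrightarrow> of_int (4 * s) < (of_int (int p)::rat)" by auto
      also have "\<dots> \<longleftrightarrow> 4 * s < int p" by (simp only: of_int_less_iff)
      finally show ?thesis .
    qed
    moreover have "4 * s < int p \<longleftrightarrow> s \<le> int (p div 4)" for s
      using op by (simp add: zdiv_int) presburger
    ultimately show ?thesis by auto
  qed
  thus ?thesis unfolding SI_def Pw_int by simp
qed

lemma Pw_half:
  assumes p: "prime p" "p = 2*h+1" and t: "even t" "0 < t" "t < p - 1"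
  shows "int p dvd Pw t h"
proof -
  have "Pw t (h+h) = Pw t h + (\<Sum>j<h. int (Suc (h+j))^t)"
    unfolding Pw_def by (rule sum_lessThan_add_split)
  moreover have "[(\<Sum>j<h. int (Suc (h+j))^t) = (\<Sum>j<h. int (Suc (h - Suc j))^t)] (mod int p)"
  proof (rule cong_sum)
    fix j assume j: "j \<in> {..<h}"
    have e: "int (Suc (h+j)) = int p - int (Suc (h - Suc j))" using j p by auto
    show "[int (Suc (h+j))^t = int (Suc (h - Suc j))^t] (mod int p)" unfolding e by (rule cong_neg_pow[OF t(1)])
  qed
  moreover have "(\<Sum>j<h. int (Suc (h - Suc j))^t) = Pw t h"
    unfolding Pw_def by (rule sum.nat_diff_reindex)
  ultimately have c1: "[Pw t (h+h) = 2 * Pw t h] (mod int p)"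
    by (metis cong_add_lcancel mult_2)
  have "Pw t (h+h) = int (\<Sum>v\<in>{1..p-1}. v^t)" unfolding Pw_nat using p by (simp add: mult_2)
  moreover have "{1..p-1} = {1..<p}" using p prime_gt_1_nat by auto
  ultimately have "Pw t (h+h) = int (\<Sum>v\<in>{1..<p}. v^t)" by simp
  moreover have "[(\<Sum>v\<in>{1..<p}. v^t) = 0] (mod p)" using powsum_zero p t by blast
  ultimately have "[Pw t (h+h) = 0] (mod int p)" by (metis cong_int_iff of_nat_0)
  hence "[2 * Pw t h = 0] (mod int p)" using c1 by (metis cong_sym cong_trans)
  hence "int p dvd 2 * Pw t h" by (simp add: cong_0_iff)
  moreover have "prime (int p)" using p(1) by simp
  moreover have "p \<ge> 3" using p(2) prime_ge_2_nat[OF p(1)] by presburger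
  hence "\<not> int p dvd 2" by (auto dest: zdvd_imp_le)
  ultimately show ?thesis by (simp add: prime_dvd_mult_iff)
qed

lemma rhs_cong:
  assumes op: "odd p" and p3: "\<not> 3 dvd p" and t: "even t"
  defines "X \<equiv> (2::int)^t" and "Y \<equiv> (3::int)^t"
  shows "int p dvd (SI p t 0 (1/4) -
     (X^5 * SI p t 0 (1/128)
      + X*Y * SI p t (1/8) (7/48)
      + X*Y * SI p t (3/16) (5/24)
      + (X + X^2) * SI p t (7/16) (11/24)
      + (X + X^2 + X*Y) * SI p t (11/24) (15/32)
      + (X + X^2 + X*Y + X^3) * SI p t (15/32) (23/48)
      + (X + X^2 + X^3) * SI p t (23/48) (31/64)
      + (X + X^2 + X^3 + X^4) * SI p t (31/64) (63/128)
      + (X + X^2 + X^3 + X^4 + X^5) * SI p t (63/128) (1/2)))"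
proof -
  let ?T = "SI p t"
  have ni: "\<And>b d n s. b * of_int d = (of_int n :: rat) \<Longrightarrow> odd n \<Longrightarrow> even d \<Longrightarrow> b * of_nat p \<noteq> of_int s"
    using noint op by blast
  have s1: "?T (3/8) (1/2) = ?T (3/8) (7/16) + ?T (7/16) (1/2)"
    by (rule SI_split; (rule ni[of _ 16 7])?; simp)
  have s2: "?T (7/16) (1/2) = ?T (7/16) (11/24) + ?T (11/24) (1/2)"
    by (rule SI_split; (rule ni[of _ 24 11])?; simp)
  have s3: "?T (11/24) (1/2) = ?T (11/24) (15/32) + ?T (15/32) (1/2)"
    by (rule SI_split; (rule ni[of _ 32 15])?; simp)
  have s4: "?T (15/32) (1/2) = ?T (15/32) (23/48) + ?T (23/48) (1/2)"
    by (rule SI_split; (rule ni[of _ 48 23])?; simp)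
  have s5: "?T (23/48) (1/2) = ?T (23/48) (31/64) + ?T (31/64) (1/2)"
    by (rule SI_split; (rule ni[of _ 64 31])?; simp)
  have s6: "?T (31/64) (1/2) = ?T (31/64) (63/128) + ?T (63/128) (1/2)"
    by (rule SI_split; (rule ni[of _ 128 63])?; simp)
  have s7: "?T (11/24) (23/48) = ?T (11/24) (15/32) + ?T (15/32) (23/48)"
    by (rule SI_split; (rule ni[of _ 32 15])?; simp)
  have d2: "\<And>b. int p dvd (?T 0 b - X * (?T 0 (b/2) + ?T ((1-b)/2) (1/2)))"
    using SI_D2[OF t op, of 0] unfolding X_def by (simp add: cong_iff_dvd_diff cong_sym_eq)
  have r1: "int p dvd (?T 0 (1/4) - X * (?T 0 (1/8) + ?T (3/8) (1/2)))"
    using d2[of "1/4"] by simp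
  have r2: "int p dvd (?T 0 (1/8) - X * (?T 0 (1/16) + ?T (7/16) (1/2)))"
    using d2[of "1/8"] by simp
  have r3: "int p dvd (?T 0 (1/16) - X * (?T 0 (1/32) + ?T (15/32) (1/2)))"
    using d2[of "1/16"] by simp
  have r4: "int p dvd (?T 0 (1/32) - X * (?T 0 (1/64) + ?T (31/64) (1/2)))"
    using d2[of "1/32"] by simp
  have r5: "int p dvd (?T 0 (1/64) - X * (?T 0 (1/128) + ?T (63/128) (1/2)))"
    using d2[of "1/64"] by simp
  have r6: "int p dvd (?T (3/8) (7/16) - Y * (?T (1/8) (7/48) + ?T (11/24) (23/48) + ?T (19/24) (13/16)))"
    using SI_D3[OF p3, of t "1/8" "7/48"] unfolding Y_def by (simp add: cong_iff_dvd_diff cong_sym_eq)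
  have r7: "int p dvd (?T (19/24) (13/16) - ?T (3/16) (5/24))"
    using SI_sym[OF t, of p "19/24" "13/16"] by (simp add: cong_iff_dvd_diff cong_sym_eq)
  let ?d1 = "?T 0 (1/4) - X * (?T 0 (1/8) + ?T (3/8) (1/2))"
  let ?d2 = "?T 0 (1/8) - X * (?T 0 (1/16) + ?T (7/16) (1/2))"
  let ?d3 = "?T 0 (1/16) - X * (?T 0 (1/32) + ?T (15/32) (1/2))"
  let ?d4 = "?T 0 (1/32) - X * (?T 0 (1/64) + ?T (31/64) (1/2))"
  let ?d5 = "?T 0 (1/64) - X * (?T 0 (1/128) + ?T (63/128) (1/2))"
  let ?d6 = "?T (3/8) (7/16) - Y * (?T (1/8) (7/48) + ?T (11/24) (23/48) + ?T (19/24) (13/16))"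
  let ?d7 = "?T (19/24) (13/16) - ?T (3/16) (5/24)"
  have "int p dvd (?d1 + X * ?d2 + X^2 * ?d3 + X^3 * ?d4 + X^4 * ?d5 + X * ?d6 + X * Y * ?d7)"
    using r1 r2 r3 r4 r5 r6 r7 by (intro dvd_add dvd_mult) auto
  moreover have "?d1 + X * ?d2 + X^2 * ?d3 + X^3 * ?d4 + X^4 * ?d5 + X * ?d6 + X * Y * ?d7 =
     SI p t 0 (1/4) -
     (X^5 * SI p t 0 (1/128)
      + X*Y * SI p t (1/8) (7/48)
      + X*Y * SI p t (3/16) (5/24)
      + (X + X^2) * SI p t (7/16) (11/24)
      + (X + X^2 + X*Y) * SI p t (11/24) (15/32)
      + (X + X^2 + X*Y + X^3) * SI p t (15/32) (23/48)
      + (X + X^2 + X^3) * SI p t (23/48) (31/64)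
      + (X + X^2 + X^3 + X^4) * SI p t (31/64) (63/128)
      + (X + X^2 + X^3 + X^4 + X^5) * SI p t (63/128) (1/2))"
    unfolding s1 s2 s3 s4 s5 s6 s7 by (simp add: algebra_simps eval_nat_numeral)
  ultimately show ?thesis by simp
qed

theorem mainTheorem7:
  fixes p k t :: nat
  assumes "prime p" and "p \<ge> 5" and "1 \<le> k" and "2 * k \<le> p - 3"
    and "t = p - 1 - 2 * k"
  shows "cong_rat p ((-1) ^ k * 4 ^ (2 * k - 1) * euler_num t)
     (32 ^ t * S_sum p t 0 (1/128)
      + 6 ^ t * S_sum p t (1/8) (7/48)
      + 6 ^ t * S_sum p t (3/16) (5/24)
      + (2 ^ t + 4 ^ t) * S_sum p t (7/16) (11/24)
      + (2 ^ t + 4 ^ t + 6 ^ t) * S_sum p t (11/24) (15/32)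
      + (2 ^ t + 4 ^ t + 6 ^ t + 8 ^ t) * S_sum p t (15/32) (23/48)
      + (2 ^ t + 4 ^ t + 8 ^ t) * S_sum p t (23/48) (31/64)
      + (2 ^ t + 4 ^ t + 8 ^ t + 16 ^ t) * S_sum p t (31/64) (63/128)
      + (2 ^ t + 4 ^ t + 8 ^ t + 16 ^ t + 32 ^ t) * S_sum p t (63/128) (1/2))"
proof -
  note pr = assms(1)
  have op: "odd p" using prime_odd_nat[OF pr] assms(2) by simp
  obtain h where h: "p = 2*h+1" using op by (metis oddE)
  have p3: "\<not> 3 dvd p"
  proof
    assume "3 dvd p"
    hence "3 = p" using pr by (metis prime_nat_iff numeral_eq_one_iff semiring_norm(86))
    thus False using assms(2) by simp
  qed
  have tev: "even t" using assms(5) h by simp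
  have tpos: "0 < t" using assms(2,4,5) by simp
  have tlt: "t < p - 1" using assms(2,3,5) by simp
  have kth: "k + t div 2 = h" using assms(2,4,5) h by simp
  have q: "h div 2 = p div 4" using h by simp
  define X where "X = (2::int)^t"
  define Y where "Y = (3::int)^t"
  define R where "R = X^5 * SI p t 0 (1/128)
      + X*Y * SI p t (1/8) (7/48)
      + X*Y * SI p t (3/16) (5/24)
      + (X + X^2) * SI p t (7/16) (11/24)
      + (X + X^2 + X*Y) * SI p t (11/24) (15/32)
      + (X + X^2 + X*Y + X^3) * SI p t (15/32) (23/48)
      + (X + X^2 + X^3) * SI p t (23/48) (31/64)
      + (X + X^2 + X^3 + X^4) * SI p t (31/64) (63/128)
      + (X + X^2 + X^3 + X^4 + X^5) * SI p t (63/128) (1/2)"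
  have dR: "int p dvd (Pw t (p div 4) - R)"
    using rhs_cong[OF op p3 tev] unfolding R_def X_def Y_def SI_quarter[OF op] by simp
  have pwg: "((2::int)^n)^t = (2^t)^n" for n by (simp only: power_mult[symmetric] mult.commute)
  have pw: "(4::int)^t = X^2" "(8::int)^t = X^3" "(16::int)^t = X^4" "(32::int)^t = X^5" "(6::int)^t = X*Y"
  proof -
    show "(4::int)^t = X^2" using pwg[of 2] unfolding X_def by simp
    show "(8::int)^t = X^3" using pwg[of 3] unfolding X_def by simp
    show "(16::int)^t = X^4" using pwg[of 4] unfolding X_def by simp
    show "(32::int)^t = X^5" using pwg[of 5] unfolding X_def by simp
    show "(6::int)^t = X*Y" unfolding X_def Y_def by (simp add: power_mult_distrib[symmetric])
  qed
  have rhs: "32 ^ t * S_sum p t 0 (1/128)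
      + 6 ^ t * S_sum p t (1/8) (7/48)
      + 6 ^ t * S_sum p t (3/16) (5/24)
      + (2 ^ t + 4 ^ t) * S_sum p t (7/16) (11/24)
      + (2 ^ t + 4 ^ t + 6 ^ t) * S_sum p t (11/24) (15/32)
      + (2 ^ t + 4 ^ t + 6 ^ t + 8 ^ t) * S_sum p t (15/32) (23/48)
      + (2 ^ t + 4 ^ t + 8 ^ t) * S_sum p t (23/48) (31/64)
      + (2 ^ t + 4 ^ t + 8 ^ t + 16 ^ t) * S_sum p t (31/64) (63/128)
      + (2 ^ t + 4 ^ t + 8 ^ t + 16 ^ t + 32 ^ t) * S_sum p t (63/128) (1/2) = (of_int R :: rat)"
    unfolding R_def S_SI pw[symmetric] unfolding X_def by simp
  obtain z where z: "Fs t - of_int (aseq p t) = of_int (int p * z)"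
    using Fs_aseq[OF op, of t] unfolding pmul_def by blast
  have ea: "aseq p t = 2 * (-1)^h * 2^t * (2 * 2^t * Pw t (p div 4) - Pw t h)"
    using aseq_Aw[OF h tev tpos] Aw_Pw[of t h] q by simp
  define L where "L = (-1)^k * 4^(2*k-1) * (-1)^(t div 2) * (aseq p t + int p * z)"
  have eu: "euler_num t = (-1)^(t div 2) * Fs t"
    by (simp add: Fs_def power_mult_distrib[symmetric] power_add[symmetric] mult.assoc[symmetric]
        flip: power_mult)
  have lhs: "(-1) ^ k * 4 ^ (2 * k - 1) * euler_num t = (of_int L :: rat)"
  proof -
    have "Fs t = of_int (aseq p t + int p * z)" using z by (simp add: algebra_simps)
    thus ?thesis unfolding eu L_def by simp
  qed
  have sg: "(-1::int)^k * (-1)^(t div 2) * (-1)^h = 1"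
  proof -
    have "(-1::int)^k * (-1)^(t div 2) = (-1)^h" using kth by (metis power_add)
    thus ?thesis by (simp flip: power_mult_distrib)
  qed
  have f4: "(4::int)^(2*k-1) * 2 * 2^t * 2 * 2^t = 4^(p-1)"
  proof -
    have "(4::int)^(2*k-1) * 2 * 2^t * 2 * 2^t = 4^(2*k-1) * 4 * 4^t"
      by (simp add: power_mult_distrib[symmetric])
    also have "\<dots> = 4^(2*k-1+1+t)" by (simp add: power_add)
    also have "2*k-1+1+t = p-1" using assms(3,4,5) by simp
    finally show ?thesis .
  qed
  have ferm: "int p dvd (4^(p-1) - 1)"
  proof -
    have "\<not> p dvd 4" using assms(2) by (auto dest: dvd_imp_le)
    hence "[4^(p-1) = 1] (mod p)" by (rule fermat_theorem[OF pr])
    hence "[int (4^(p-1)) = int 1] (mod int p)" by (simp only: cong_int_iff)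
    thus ?thesis by (simp add: cong_iff_dvd_diff)
  qed
  have dh: "int p dvd Pw t h" using Pw_half[OF pr h tev tpos tlt] .
  define c where "c = (-1::int)^k * 4^(2*k-1) * (-1)^(t div 2)"
  have "L - R = c * (2 * (-1)^h * 2^t * 2 * 2^t) * Pw t (p div 4) - c * 2 * (-1)^h * 2^t * Pw t h + int p * (c * z) - R"
    unfolding L_def ea c_def by (simp add: algebra_simps)
  also have "c * (2 * (-1)^h * 2^t * 2 * 2^t) = 4^(p-1)"
  proof -
    have "c * (2 * (-1)^h * 2^t * 2 * 2^t) = ((-1)^k * (-1)^(t div 2) * (-1)^h) * ((4::int)^(2*k-1) * 2 * 2^t * 2 * 2^t)"
      unfolding c_def by (simp only: mult_ac)
    also have "\<dots> = 4^(p-1)" unfolding sg f4 by simp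
    finally show ?thesis .
  qed
  finally have eqLR: "L - R = (4^(p-1) - 1) * Pw t (p div 4) - (c * 2 * (-1)^h * 2^t) * Pw t h + int p * (c * z) + (Pw t (p div 4) - R)"
    by (simp add: algebra_simps)
  have dv: "int p dvd (4^(p-1) - 1) * Pw t (p div 4) - (c * 2 * (-1)^h * 2^t) * Pw t h + int p * (c * z) + (Pw t (p div 4) - R)"
  proof -
    have a1: "int p dvd (4^(p-1) - 1) * Pw t (p div 4)" using ferm by (rule dvd_mult2)
    have a2: "int p dvd (c * 2 * (-1)^h * 2^t) * Pw t h" using dh by (rule dvd_mult)
    have a3: "int p dvd int p * (c * z)" by simp
    show ?thesis by (rule dvd_add[OF dvd_add[OF dvd_diff[OF a1 a2] a3] dR])
  qed
  have dLR: "int p dvd (L - R)" unfolding eqLR by (rule dv)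
  show ?thesis unfolding cong_rat_def rhs lhs
  proof (intro exI conjI)
    show "(of_int L :: rat) - of_int R = of_int (L - R) / of_int 1" by simp
    show "\<not> int p dvd 1" using assms(2) by simp
    show "int p dvd (L - R)" by (rule dLR)
  qed
qed

end
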